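(* Let $A$ be an eNTA (with any finite number of clocks) and let $\gamma=q_0\tau_1q_1\cdots\tau_nq_n$ be a reachable path of $A$. For each $1\le i\le n$, the set $T_i$ of times at which $\tau_i$ is taken, over all runs along $\gamma$, is one of the following: a single point $\{n\}$ with $n\in\mathbb N_0$, or an interval (open, closed or half-open) with end-points $m<n$, where $m\in\mathbb N_0$ and $n\in\mathbb N\cup\{\infty\}$. Consequently, the timestamp of the $i$-th event, namely $T_i\times\{a_i\}$ where $a_i$ is the action of $\tau_i$, is a labeled integral point or a labeled interval of this form.
   Context: **Automata.** An eNTA (non-deterministic timed automaton with silent transitions) is a tuple $A=(\mathcal{Q},q_0,\Sigma_\epsilon,\mathcal{C},\mathcal{T})$ with the following components. - $\mathcal{Q}$ is a finite set of locations and $q_0$ is the initial location. - $\Sigma$ is a finite set of observable actions, and $\Sigma_\epsilon=\Sigma\cup\{\epsilon\}$, where $\epsilon$ is silent. - $\mathcal{C}$ is a finite set of clocks. - $\mathcal{T}$ is a finite set of transitions $(q,a,g,\mathcal{C}_{rst},q')$ with $a\in\Sigma_\epsilon$, $\mathcal C_{rst}\subseteq\mathcal C$ the clocks reset, and guard $g$ a finite conjunction of constraints $c\sim n$ with $c\in\mathcal C$, $\sim\in\{<,\le,=,\ge,>\}$ and $n\in\mathbb N_0$. **Runs.** A run is a finite sequence $$(q_0,\mathbf 0)\xrightarrow{d_1}(q_0,\mathbf 0+d_1)\xrightarrow{\tau_1}(q_1,v_1)\xrightarrow{d_2}\cdots\xrightarrow{\tau_k}(q_k,v_k),$$ where $d_i\in\mathbb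 R_{\ge0}$, $\tau_i=(q_{i-1},a_i,g_i,\mathcal C_i,q_i)\in\mathcal T$, $v_0=\mathbf 0$, $v_{i-1}+d_i\models g_i$, and $v_i$ equals $v_{i-1}+d_i$ with the clocks in $\mathcal C_i$ set to $0$. The $i$-th transition is taken at time $t_i=d_1+\dots+d_i$. **Paths.** A path $\gamma=q_0\tau_1q_1\cdots\tau_nq_n$ is a sequence of transitions with $\tau_i$ going from $q_{i-1}$ to $q_i$. A run along $\gamma$ uses exactly the transitions $\tau_1,\dots,\tau_n$ in order, and $\gamma$ is reachable if such a run exists. *)

theory Defs
  imports Main "HOL-Library.Extended_Nat" Complex_Main
begin

datatype cmp = Lt | Le | Eq | Ge | Gt

text \<open>A clock constraint c ~ n, n a natural number; a guard is a finite conjunction (list).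
  Actions: None is the silent action epsilon, Some a an observable action.\<close>
type_synonym 'c constr = "'c \<times> cmp \<times> nat"
type_synonym ('q,'a,'c) transition = "'q \<times> 'a option \<times> 'c constr list \<times> 'c set \<times> 'q"

record ('q,'a,'c) enta =
  locs :: "'q set"
  init :: "'q"
  acts :: "'a set"
  clks :: "'c set"
  trans :: "('q,'a,'c) transition set"

definition src :: "('q,'a,'c) transition \<Rightarrow> 'q" where "src t = fst t"
definition act :: "('q,'a,'c) transition \<Rightarrow> 'a option" where "act t = fst (snd t)"
definition guard :: "('q,'a,'c) transition \<Rightarrow> 'c constr list" where "guard t = fst (snd (snd t))"
definition resets :: "('q,'a,'c) transition \<Rightarrow> 'c set" where "resets t = fst (snd (snd (snd t)))"
definition tgt :: "('q,'a,'c) transition \<Rightarrow> 'q" where "tgt t = snd (snd (snd (snd t)))"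

definition wf_enta :: "('q,'a,'c) enta \<Rightarrow> bool" where
  "wf_enta A \<longleftrightarrow> finite (locs A) \<and> init A \<in> locs A \<and> finite (acts A) \<and> finite (clks A)
     \<and> finite (trans A)
     \<and> (\<forall>t\<in>trans A. src t \<in> locs A \<and> tgt t \<in> locs A \<and> set_option (act t) \<subseteq> acts A
          \<and> (\<forall>(c,_,_)\<in>set (guard t). c \<in> clks A) \<and> resets t \<subseteq> clks A)"

fun sat_cmp :: "real \<Rightarrow> cmp \<Rightarrow> nat \<Rightarrow> bool" where
  "sat_cmp x Lt n = (x < real n)"
| "sat_cmp x Le n = (x \<le> real n)"
| "sat_cmp x Eq n = (x = real n)"
| "sat_cmp x Ge n = (x \<ge> real n)"
| "sat_cmp x Gt n = (x > real n)"

definition sat_guard :: "('c \<Rightarrow> real) \<Rightarrow> 'c constr list \<Rightarrow> bool" where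
  "sat_guard v g \<longleftrightarrow> (\<forall>(c,r,n)\<in>set g. sat_cmp (v c) r n)"

definition delay :: "('c \<Rightarrow> real) \<Rightarrow> real \<Rightarrow> ('c \<Rightarrow> real)" where
  "delay v d = (\<lambda>c. v c + d)"

definition reset :: "('c \<Rightarrow> real) \<Rightarrow> 'c set \<Rightarrow> ('c \<Rightarrow> real)" where
  "reset v R = (\<lambda>c. if c \<in> R then 0 else v c)"

fun ok_run :: "('c \<Rightarrow> real) \<Rightarrow> ('q,'a,'c) transition list \<Rightarrow> real list \<Rightarrow> bool" where
  "ok_run v [] [] = True"
| "ok_run v (t # ts) (d # ds) =
     (d \<ge> 0 \<and> sat_guard (delay v d) (guard t) \<and> ok_run (reset (delay v d) (resets t)) ts ds)"
| "ok_run v _ _ = False"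

definition is_path :: "('q,'a,'c) enta \<Rightarrow> ('q,'a,'c) transition list \<Rightarrow> bool" where
  "is_path A ts \<longleftrightarrow> set ts \<subseteq> trans A
     \<and> (ts \<noteq> [] \<longrightarrow> src (hd ts) = init A)
     \<and> (\<forall>i. Suc i < length ts \<longrightarrow> tgt (ts ! i) = src (ts ! Suc i))"

definition run_along :: "('q,'a,'c) enta \<Rightarrow> ('q,'a,'c) transition list \<Rightarrow> real list \<Rightarrow> bool" where
  "run_along A ts ds \<longleftrightarrow> ok_run (\<lambda>_. 0) ts ds"

definition reachable_path :: "('q,'a,'c) enta \<Rightarrow> ('q,'a,'c) transition list \<Rightarrow> bool" where
  "reachable_path A ts \<longleftrightarrow> is_path A ts \<and> (\<exists>ds. run_along A ts ds)"

definition taken_times :: "('q,'a,'c) enta \<Rightarrow> ('q,'a,'c) transition list \<Rightarrow> nat \<Rightarrow> real set" where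
  "taken_times A ts i = {sum_list (take i ds) | ds. run_along A ts ds}"

definition timestamp :: "('q,'a,'c) enta \<Rightarrow> ('q,'a,'c) transition list \<Rightarrow> nat \<Rightarrow> (real \<times> 'a option) set" where
  "timestamp A ts i = taken_times A ts i \<times> {act (ts ! (i - 1))}"

definition integral_set :: "real set \<Rightarrow> bool" where
  "integral_set S \<longleftrightarrow>
     (\<exists>n::nat. S = {real n})
   \<or> (\<exists>m n::nat. m < n \<and>
        (S = {real m .. real n} \<or> S = {real m <.. real n} \<or> S = {real m ..< real n} \<or> S = {real m <..< real n}))
   \<or> (\<exists>m::nat. S = {real m ..} \<or> S = {real m <..})"

end

theory Submission
  imports Defs
begin


lemma ok_run_len: "ok_run v ts ds \<Longrightarrow> length ds = length ts"
  by (induction v ts ds rule: ok_run.induct) auto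

lemma ok_run_nonneg: "ok_run v ts ds \<Longrightarrow> \<forall>d\<in>set ds. d \<ge> 0"
  by (induction v ts ds rule: ok_run.induct) auto

lemma sat_cmp_convex:
  assumes "sat_cmp x r n" "sat_cmp y r n" "0 \<le> l" "l \<le> 1"
  shows "sat_cmp (l*x+(1-l)*y) r n"
proof -
  have e: "l*x+(1-l)*y - real n = l*(x - real n) + (1-l)*(y - real n)" by (simp add: algebra_simps)
  show ?thesis
  proof (cases r)
    case Lt
    then have "x - n < 0" "y - n < 0" using assms by auto
    then have "l*(x - real n) + (1-l)*(y - real n) < 0" using assms(3,4)
      by (cases "l = 0") (auto intro!: add_neg_nonpos mult_pos_neg mult_nonneg_nonpos)
    then show ?thesis using e Lt by simp
  next
    case Le
    then have "x - n \<le> 0" "y - n \<le> 0" using assms by auto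
    then have "l*(x - real n) + (1-l)*(y - real n) \<le> 0" using assms(3,4)
      by (auto intro!: add_nonpos_nonpos mult_nonneg_nonpos)
    then show ?thesis using e Le by simp
  next
    case Eq
    then have "x - n = 0" "y - n = 0" using assms by auto
    then show ?thesis using e Eq by simp
  next
    case Ge
    then have "x - n \<ge> 0" "y - n \<ge> 0" using assms by auto
    then have "l*(x - real n) + (1-l)*(y - real n) \<ge> 0" using assms(3,4)
      by (auto intro!: add_nonneg_nonneg)
    then show ?thesis using e Ge by simp
  next
    case Gt
    then have "x - n > 0" "y - n > 0" using assms by auto
    then have "l*(x - real n) + (1-l)*(y - real n) > 0" using assms(3,4)
      by (cases "l = 0") (auto intro!: add_pos_nonneg mult_pos_pos)
    then show ?thesis using e Gt by simp
  qed
qed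

lemma ok_run_convex:
  assumes "0 \<le> l" "l \<le> 1"
  shows "ok_run v1 ts ds1 \<Longrightarrow> ok_run v2 ts ds2 \<Longrightarrow>
    ok_run (\<lambda>c. l*v1 c + (1-l)*v2 c) ts (map2 (\<lambda>a b. l*a+(1-l)*b) ds1 ds2)"
proof (induction ts arbitrary: v1 v2 ds1 ds2)
  case Nil
  then show ?case by (cases ds1; cases ds2) auto
next
  case (Cons t ts)
  obtain d1 r1 where d1: "ds1 = d1 # r1" using Cons.prems(1) by (cases ds1) auto
  obtain d2 r2 where d2: "ds2 = d2 # r2" using Cons.prems(2) by (cases ds2) auto
  have h1: "d1 \<ge> 0" "sat_guard (delay v1 d1) (guard t)" "ok_run (reset (delay v1 d1) (resets t)) ts r1"
    using Cons.prems(1) d1 by auto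
  have h2: "d2 \<ge> 0" "sat_guard (delay v2 d2) (guard t)" "ok_run (reset (delay v2 d2) (resets t)) ts r2"
    using Cons.prems(2) d2 by auto
  have "l*d1+(1-l)*d2 \<ge> 0" using h1(1) h2(1) assms by simp
  moreover have "sat_guard (delay (\<lambda>c. l*v1 c + (1-l)*v2 c) (l*d1+(1-l)*d2)) (guard t)"
    unfolding sat_guard_def
  proof (clarify)
    fix c r n assume cn: "(c, r, n) \<in> set (guard t)"
    have "sat_cmp (delay v1 d1 c) r n" "sat_cmp (delay v2 d2 c) r n"
      using h1(2) h2(2) cn unfolding sat_guard_def by auto
    from sat_cmp_convex[OF this assms]
    show "sat_cmp (delay (\<lambda>c. l * v1 c + (1 - l) * v2 c) (l * d1 + (1 - l) * d2) c) r n"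
      by (simp add: delay_def algebra_simps)
  qed
  moreover have "reset (delay (\<lambda>c. l*v1 c + (1-l)*v2 c) (l*d1+(1-l)*d2)) (resets t)
     = (\<lambda>c. l * reset (delay v1 d1) (resets t) c + (1-l) * reset (delay v2 d2) (resets t) c)"
    by (auto simp: reset_def delay_def algebra_simps)
  moreover note Cons.IH[OF h1(3) h2(3)]
  ultimately show ?case using d1 d2 by simp
qed

lemma sum_take_map2:
  fixes l :: real
  shows "length ds1 = length ds2 \<Longrightarrow>
   sum_list (take i (map2 (\<lambda>a b. l*a+(1-l)*b) ds1 ds2)) = l * sum_list (take i ds1) + (1-l) * sum_list (take i ds2)"
proof (induction ds1 arbitrary: ds2 i)
  case Nil then show ?case by simp
next
  case (Cons a ds1)
  then obtain b r where "ds2 = b # r" by (cases ds2) auto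
  with Cons show ?case by (cases i) (auto simp: algebra_simps)
qed

fun mapd :: "(real \<Rightarrow> real) \<Rightarrow> real \<Rightarrow> real list \<Rightarrow> real list" where
  "mapd P T [] = []"
| "mapd P T (d#ds) = (P (T+d) - P T) # mapd P (T+d) ds"

lemma sum_take_mapd: "sum_list (take i (mapd P T ds)) = P (T + sum_list (take i ds)) - P T"
proof (induction ds arbitrary: T i)
  case Nil then show ?case by simp
next
  case (Cons d ds) then show ?case by (cases i) (auto simp: algebra_simps)
qed

lemma ok_run_mapd:
  assumes key: "\<And>x y r n. sat_cmp (x-y) r n \<longleftrightarrow> sat_cmp (P x - P y) r n"
  shows "ok_run v ts ds \<Longrightarrow> v = (\<lambda>c. T - R c) \<Longrightarrow> ok_run (\<lambda>c. P T - P (R c)) ts (mapd P T ds)"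
proof (induction v ts ds arbitrary: T R rule: ok_run.induct)
  case (1 v) then show ?case by simp
next
  case (2 v t ts d ds)
  have h: "d \<ge> 0" "sat_guard (delay v d) (guard t)" "ok_run (reset (delay v d) (resets t)) ts ds"
    using "2.prems" by auto
  have "sat_cmp ((T+d) - T) Ge 0" using h(1) by simp
  then have g0: "P (T+d) - P T \<ge> 0" using key[of "T+d" T Ge 0] by simp
  define R' where "R' = (\<lambda>c. if c \<in> resets t then T+d else R c)"
  have dv: "delay v d = (\<lambda>c. (T+d) - R c)" using "2.prems"(2) by (auto simp: delay_def)
  have rv: "reset (delay v d) (resets t) = (\<lambda>c. (T+d) - R' c)"
    unfolding dv R'_def reset_def by auto
  have sg: "sat_guard (delay (\<lambda>c. P T - P (R c)) (P (T+d) - P T)) (guard t)"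
    using h(2) key unfolding sat_guard_def dv[unfolded delay_def] delay_def by auto
  have rv2: "reset (delay (\<lambda>c. P T - P (R c)) (P (T+d) - P T)) (resets t) = (\<lambda>c. P (T+d) - P (R' c))"
    unfolding R'_def reset_def delay_def by auto
  have "ok_run (\<lambda>c. P (T+d) - P (R' c)) ts (mapd P (T+d) ds)"
    using "2.IH"[OF h(3) rv] by blast
  then show ?case using g0 sg rv2 by simp
qed auto



definition gmap :: "real \<Rightarrow> real \<Rightarrow> real \<Rightarrow> real" where
  "gmap f f' u = (if u \<le> f then u * (f'/f) else f' + (u - f) * ((1 - f')/(1 - f)))"

definition phi :: "real \<Rightarrow> real \<Rightarrow> real \<Rightarrow> real" where
  "phi f f' x = of_int \<lfloor>x\<rfloor> + gmap f f' (x - of_int \<lfloor>x\<rfloor>)"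

context fixes f f' :: real assumes f: "0 < f" "f < 1" and f': "0 < f'" "f' < 1"
begin

lemma gmap_range: "0 \<le> u \<Longrightarrow> u < 1 \<Longrightarrow> 0 \<le> gmap f f' u \<and> gmap f f' u < 1"
proof (cases "u \<le> f")
  case True
  assume u: "0 \<le> u" "u < 1"
  have "u * (f'/f) \<le> f * (f'/f)" using True f f' by (intro mult_right_mono) auto
  also have "\<dots> = f'" using f by simp
  finally have A: "u * (f'/f) \<le> f'" .
  have B: "0 \<le> u * (f'/f)" using u f f' by simp
  have "gmap f f' u = u * (f'/f)" using True by (simp add: gmap_def)
  then show ?thesis using A B f' by linarith
next
  case False
  assume u: "0 \<le> u" "u < 1"
  have "(u - f) * ((1 - f')/(1 - f)) < (1 - f) * ((1 - f')/(1 - f))"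
    using False u f f' by (intro mult_strict_right_mono) auto
  also have "\<dots> = 1 - f'" using f by simp
  finally have "(u - f) * ((1 - f')/(1 - f)) < 1 - f'" .
  moreover have "(u - f) * ((1 - f')/(1 - f)) \<ge> 0" using False f f' by simp
  ultimately show ?thesis using False f' by (simp add: gmap_def)
qed

lemma gmap_mono: "u < w \<Longrightarrow> gmap f f' u < gmap f f' w"
proof -
  assume uw: "u < w"
  show ?thesis
  proof (cases "w \<le> f")
    case True
    then have "u \<le> f" using uw by simp
    have "u * (f'/f) < w * (f'/f)" using uw f f' by (intro mult_strict_right_mono) auto
    then show ?thesis using True \<open>u \<le> f\<close> by (simp add: gmap_def)
  next
    case False
    show ?thesis
    proof (cases "u \<le> f")
      case True
      have "u * (f'/f) \<le> f * (f'/f)" using True f f' by (intro mult_right_mono) auto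
      also have "\<dots> = f'" using f by simp
      finally have "u * (f'/f) \<le> f'" .
      moreover have "(w - f) * ((1 - f')/(1 - f)) > 0" using False f f' by simp
      ultimately show ?thesis using True False by (simp add: gmap_def)
    next
      case F2: False
      have "(u - f) * ((1 - f')/(1 - f)) < (w - f) * ((1 - f')/(1 - f))"
        using uw f f' by (intro mult_strict_right_mono) auto
      then show ?thesis using False F2 by (simp add: gmap_def)
    qed
  qed
qed

lemma gmap_less_iff: "gmap f f' u < gmap f f' w \<longleftrightarrow> u < w"
  using gmap_mono[of u w] gmap_mono[of w u] by (cases u w rule: linorder_cases) auto

lemma gmap_eq_iff: "gmap f f' u = gmap f f' w \<longleftrightarrow> u = w"
  using gmap_mono[of u w] gmap_mono[of w u] by (cases u w rule: linorder_cases) auto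

lemma int_shift:
  fixes D k :: int and e e' :: real
  assumes "-1 < e" "e < 1" "-1 < e'" "e' < 1" "e < 0 \<longleftrightarrow> e' < 0" "e = 0 \<longleftrightarrow> e' = 0"
  shows "(of_int D + e < of_int k \<longleftrightarrow> of_int D + e' < of_int k)
       \<and> (of_int D + e = of_int k \<longleftrightarrow> of_int D + e' = of_int k)"
proof (cases D k rule: linorder_cases)
  case less
  then have "D \<le> k - 1" by simp
  then have "real_of_int D \<le> real_of_int k - 1" by linarith
  then show ?thesis using assms by auto
next
  case equal
  then show ?thesis using assms by auto
next
  case greater
  then have "D \<ge> k + 1" by simp
  then have "real_of_int D \<ge> real_of_int k + 1" by linarith
  then show ?thesis using assms by auto
qed

lemma phi_key: "(x - y < of_int k \<longleftrightarrow> phi f f' x - phi f f' y < of_int k)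
   \<and> (x - y = of_int k \<longleftrightarrow> phi f f' x - phi f f' y = of_int k)"
proof -
  define u where "u = x - of_int \<lfloor>x\<rfloor>"
  define w where "w = y - of_int \<lfloor>y\<rfloor>"
  have u: "0 \<le> u" "u < 1" unfolding u_def by linarith+
  have w: "0 \<le> w" "w < 1" unfolding w_def by linarith+
  have gu: "0 \<le> gmap f f' u" "gmap f f' u < 1" using gmap_range[OF u] by auto
  have gw: "0 \<le> gmap f f' w" "gmap f f' w < 1" using gmap_range[OF w] by auto
  have xy: "x - y = of_int (\<lfloor>x\<rfloor> - \<lfloor>y\<rfloor>) + (u - w)" unfolding u_def w_def by simp
  have pxy: "phi f f' x - phi f f' y = of_int (\<lfloor>x\<rfloor> - \<lfloor>y\<rfloor>) + (gmap f f' u - gmap f f' w)"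
    unfolding phi_def u_def w_def by simp
  have "u - w < 0 \<longleftrightarrow> gmap f f' u - gmap f f' w < 0" using gmap_less_iff[of u w] by simp
  moreover have "u - w = 0 \<longleftrightarrow> gmap f f' u - gmap f f' w = 0" using gmap_eq_iff[of u w] by simp
  ultimately show ?thesis unfolding xy pxy
    by (intro int_shift) (use u w gu gw in auto)
qed

lemma phi_cmp: "sat_cmp (x-y) r n \<longleftrightarrow> sat_cmp (phi f f' x - phi f f' y) r n"
proof -
  have k: "(x - y < real n \<longleftrightarrow> phi f f' x - phi f f' y < real n)
   \<and> (x - y = real n \<longleftrightarrow> phi f f' x - phi f f' y = real n)"
    using phi_key[of x y "int n"] by simp
  show ?thesis using k by (cases r) auto
qed

lemma phi_zero: "phi f f' 0 = 0"
  using f by (simp add: phi_def gmap_def)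

lemma phi_val: "0 < z \<Longrightarrow> z < 1 \<Longrightarrow> z = f \<Longrightarrow> phi f f' (of_int k + z) = of_int k + f'"
proof -
  assume z: "0 < z" "z < 1" "z = f"
  have "\<lfloor>of_int k + z\<rfloor> = k" using z by linarith
  then show ?thesis using z f by (simp add: phi_def gmap_def)
qed

end


lemma interval_cases:
  fixes S :: "real set"
  assumes sub: "S \<subseteq> {a..b}" and sup: "{a<..<b} \<subseteq> S" and ab: "a < b"
  shows "S = {a..b} \<or> S = {a<..b} \<or> S = {a..<b} \<or> S = {a<..<b}"
proof -
  have in1: "\<And>z. z \<in> S \<Longrightarrow> a \<le> z \<and> z \<le> b" using sub by auto
  have in2: "\<And>z. a < z \<Longrightarrow> z < b \<Longrightarrow> z \<in> S" using sup by auto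
  show ?thesis
  proof (cases "a \<in> S"; cases "b \<in> S")
    assume h: "a \<in> S" "b \<in> S"
    have "S = {a..b}"
    proof (intro equalityI subsetI)
      fix z assume "z \<in> {a..b}" then have "z = a \<or> z = b \<or> (a < z \<and> z < b)" by auto
      then show "z \<in> S" using h in2 by blast
    qed (use in1 in auto)
    then show ?thesis by blast
  next
    assume h: "a \<in> S" "b \<notin> S"
    have "S = {a..<b}"
    proof (intro equalityI subsetI)
      fix z assume "z \<in> {a..<b}" then have "z = a \<or> (a < z \<and> z < b)" by auto
      then show "z \<in> S" using h in2 by blast
    next
      fix z assume z: "z \<in> S" then have "a \<le> z" "z \<le> b" "z \<noteq> b" using in1 h by auto
      then show "z \<in> {a..<b}" by simp
    qed
    then show ?thesis by blast
  next
    assume h: "a \<notin> S" "b \<in> S"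
    have "S = {a<..b}"
    proof (intro equalityI subsetI)
      fix z assume "z \<in> {a<..b}" then have "z = b \<or> (a < z \<and> z < b)" by auto
      then show "z \<in> S" using h in2 by blast
    next
      fix z assume z: "z \<in> S" then have "a \<le> z" "z \<le> b" "z \<noteq> a" using in1 h by auto
      then show "z \<in> {a<..b}" by simp
    qed
    then show ?thesis by blast
  next
    assume h: "a \<notin> S" "b \<notin> S"
    have "S = {a<..<b}"
    proof (intro equalityI subsetI)
      fix z assume "z \<in> {a<..<b}" then show "z \<in> S" using in2 by simp
    next
      fix z assume z: "z \<in> S" then have "a \<le> z" "z \<le> b" "z \<noteq> a" "z \<noteq> b" using in1 h by auto
      then show "z \<in> {a<..<b}" by simp
    qed
    then show ?thesis by blast
  qed
qed

lemma ray_cases: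
  fixes S :: "real set"
  assumes sub: "S \<subseteq> {a..}" and sup: "{a<..} \<subseteq> S"
  shows "S = {a..} \<or> S = {a<..}"
proof (cases "a \<in> S")
  case True
  have "S = {a..}"
  proof (intro equalityI subsetI)
    fix z assume "z \<in> {a..}" then have "z = a \<or> a < z" by auto
    then show "z \<in> S" using True sup by auto
  qed (use sub in auto)
  then show ?thesis by blast
next
  case False
  have "S = {a<..}"
  proof (intro equalityI subsetI)
    fix z assume "z \<in> S" then have "a \<le> z" "z \<noteq> a" using sub False by auto
    then show "z \<in> {a<..}" by auto
  qed (use sup in auto)
  then show ?thesis by blast
qed

lemma integral_from_props:
  fixes S :: "real set"
  assumes ne: "S \<noteq> {}" and nn: "\<And>x. x\<in>S \<Longrightarrow> 0 \<le> x"
    and cv: "\<And>x y z. x\<in>S \<Longrightarrow> y\<in>S \<Longrightarrow> x \<le> z \<Longrightarrow> z \<le> y \<Longrightarrow> z\<in>S"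
    and un: "\<And>x y k. x\<in>S \<Longrightarrow> of_int k < x \<Longrightarrow> x < of_int k + 1 \<Longrightarrow> of_int k < y \<Longrightarrow> y < of_int k + 1 \<Longrightarrow> y\<in>S"
  shows "integral_set S"
proof -
  have bb: "bdd_below S" using nn by (auto simp: bdd_below_def)
  define m where "m = Inf S"
  have lo: "\<And>x. x \<in> S \<Longrightarrow> m \<le> x" unfolding m_def using bb by (simp add: cInf_lower)
  have lo2: "\<And>z. m < z \<Longrightarrow> \<exists>x\<in>S. x < z" unfolding m_def using ne by (simp add: cInf_lessD)
  have m0: "0 \<le> m" unfolding m_def using ne nn by (simp add: cInf_greatest)
  have mint: "m = of_int \<lfloor>m\<rfloor>"
  proof (rule ccontr)
    assume "m \<noteq> of_int \<lfloor>m\<rfloor>"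
    then have k: "of_int \<lfloor>m\<rfloor> < m" "m < of_int \<lfloor>m\<rfloor> + 1" by linarith+
    obtain x where x: "x \<in> S" "x < of_int \<lfloor>m\<rfloor> + 1" using lo2[OF k(2)] by blast
    have "m \<le> x" using lo x by auto
    then have "(of_int \<lfloor>m\<rfloor> + m)/2 \<in> S" using un[OF x(1), of "\<lfloor>m\<rfloor>"] k x by auto
    then have "m \<le> (of_int \<lfloor>m\<rfloor> + m)/2" using lo by blast
    then show False using k by (simp add: field_simps)
  qed
  define mn where "mn = nat \<lfloor>m\<rfloor>"
  have mn: "real mn = m" unfolding mn_def using m0 mint by (metis of_int_of_nat_eq int_nat_eq of_int_0_le_iff)
  show ?thesis
  proof (cases "bdd_above S")
    case True
    define M where "M = Sup S"
    have hi: "\<And>x. x \<in> S \<Longrightarrow> x \<le> M" unfolding M_def using True by (simp add: cSup_upper)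
    have hi2: "\<And>z. z < M \<Longrightarrow> \<exists>x\<in>S. z < x" unfolding M_def using ne by (simp add: less_cSupD)
    obtain x0 where x0: "x0 \<in> S" using ne by blast
    have mM: "m \<le> M" using lo[OF x0] hi[OF x0] by linarith
    have Mint: "M = of_int \<lfloor>M\<rfloor>"
    proof (rule ccontr)
      assume "M \<noteq> of_int \<lfloor>M\<rfloor>"
      then have k: "of_int \<lfloor>M\<rfloor> < M" "M < of_int \<lfloor>M\<rfloor> + 1" by linarith+
      obtain x where x: "x \<in> S" "of_int \<lfloor>M\<rfloor> < x" using hi2[OF k(1)] by blast
      have "x \<le> M" using hi x by auto
      then have xl: "x < of_int \<lfloor>M\<rfloor> + 1" using k by linarith
      have b1: "of_int \<lfloor>M\<rfloor> < (of_int \<lfloor>M\<rfloor> + 1 + M)/2" using k by (simp add: field_simps)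
      have b2: "(of_int \<lfloor>M\<rfloor> + 1 + M)/2 < of_int \<lfloor>M\<rfloor> + 1" using k by (simp add: field_simps)
      have "(of_int \<lfloor>M\<rfloor> + 1 + M)/2 \<in> S" using un[OF x(1) x(2) xl b1 b2] .
      then have "(of_int \<lfloor>M\<rfloor> + 1 + M)/2 \<le> M" using hi by blast
      then show False using k by (simp add: field_simps)
    qed
    define Mn where "Mn = nat \<lfloor>M\<rfloor>"
    have Mn: "real Mn = M" unfolding Mn_def using m0 mM Mint
      by (metis of_int_of_nat_eq int_nat_eq of_int_0_le_iff order_trans)
    have mid: "\<And>z. m < z \<Longrightarrow> z < M \<Longrightarrow> z \<in> S"
    proof -
      fix z assume z: "m < z" "z < M"
      obtain a where a: "a \<in> S" "a < z" using lo2[OF z(1)] by blast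
      obtain b where b: "b \<in> S" "z < b" using hi2[OF z(2)] by blast
      show "z \<in> S" using cv[OF a(1) b(1)] a b by auto
    qed
    show ?thesis
    proof (cases "m = M")
      case True
      have "S = {real mn}"
      proof
        show "S \<subseteq> {real mn}"
        proof
          fix z assume "z \<in> S" then have "m \<le> z" "z \<le> M" using lo hi by auto
          then show "z \<in> {real mn}" using True mn by simp
        qed
        have "x0 = m" using lo[OF x0] hi[OF x0] True by simp
        then show "{real mn} \<subseteq> S" using x0 mn by simp
      qed
      then show ?thesis unfolding integral_set_def by blast
    next
      case False
      then have lt: "mn < Mn" using mM mn Mn by simp
      have sub: "S \<subseteq> {real mn .. real Mn}" using lo hi mn Mn by auto
      have sup: "{real mn <..< real Mn} \<subseteq> S" using mid mn Mn by auto
      have "S = {real mn .. real Mn} \<or> S = {real mn <.. real Mn} \<or> S = {real mn ..< real Mn} \<or> S = {real mn <..< real Mn}"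
        using interval_cases[OF sub sup] lt by simp
      then show ?thesis unfolding integral_set_def using lt by blast
    qed
  next
    case False
    have hi2: "\<And>z. \<exists>x\<in>S. z < x" using False by (meson bdd_above.I not_le_imp_less)
    have mid: "\<And>z. m < z \<Longrightarrow> z \<in> S"
    proof -
      fix z assume z: "m < z"
      obtain a where a: "a \<in> S" "a < z" using lo2[OF z(1)] by blast
      obtain b where b: "b \<in> S" "z < b" using hi2 by blast
      show "z \<in> S" using cv[OF a(1) b(1)] a b by auto
    qed
    have sub: "S \<subseteq> {real mn ..}" using lo mn by auto
    have sup: "{real mn <..} \<subseteq> S" using mid mn by auto
    have "S = {real mn ..} \<or> S = {real mn <..}" using ray_cases[OF sub sup] .
    then show ?thesis unfolding integral_set_def by blast
  qed
qed



theorem proposition2: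
  fixes A :: "('q,'a,'c) enta" and ts :: "('q,'a,'c) transition list" and i :: nat
  assumes "wf_enta A"
    and "reachable_path A ts"
    and "1 \<le> i" and "i \<le> length ts"
  shows "integral_set (taken_times A ts i)
       \<and> (\<exists>S. integral_set S \<and> timestamp A ts i = S \<times> {act (ts ! (i - 1))})"
proof -
  let ?S = "taken_times A ts i"
  have mem: "\<And>x. x \<in> ?S \<longleftrightarrow> (\<exists>ds. x = sum_list (take i ds) \<and> ok_run (\<lambda>_. 0) ts ds)"
    unfolding taken_times_def run_along_def by auto
  have ne: "?S \<noteq> {}" using assms(2) mem unfolding reachable_path_def run_along_def by blast
  have nn: "\<And>x. x \<in> ?S \<Longrightarrow> 0 \<le> x"
  proof -
    fix x assume "x \<in> ?S"
    then obtain ds where ds: "x = sum_list (take i ds)" "ok_run (\<lambda>_. 0) ts ds" using mem by blast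
    have "\<forall>d\<in>set (take i ds). 0 \<le> d" using ok_run_nonneg[OF ds(2)] by (meson in_set_takeD)
    then show "0 \<le> x" using ds(1) by (simp add: sum_list_nonneg)
  qed
  have cv: "\<And>x y z. x\<in>?S \<Longrightarrow> y\<in>?S \<Longrightarrow> x \<le> z \<Longrightarrow> z \<le> y \<Longrightarrow> z\<in>?S"
  proof -
    fix x y z assume x: "x\<in>?S" and y: "y\<in>?S" and xz: "x \<le> z" and zy: "z \<le> y"
    obtain ds1 where d1: "x = sum_list (take i ds1)" "ok_run (\<lambda>_. 0) ts ds1" using mem x by blast
    obtain ds2 where d2: "y = sum_list (take i ds2)" "ok_run (\<lambda>_. 0) ts ds2" using mem y by blast
    show "z \<in> ?S"
    proof (cases "x = y")
      case True then show ?thesis using x xz zy by simp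
    next
      case False
      then have xy: "x < y" using xz zy by simp
      define l where "l = (y - z)/(y - x)"
      have l: "0 \<le> l" "l \<le> 1" unfolding l_def using xy xz zy by (auto simp: field_simps)
      have ne0: "y - x \<noteq> 0" using xy by simp
      have e1: "1 - l = (z - x)/(y - x)" unfolding l_def using ne0 by (simp add: field_simps)
      have "l * x + (1 - l) * y = ((y - z)*x + (z - x)*y)/(y - x)"
        unfolding e1 unfolding l_def by (simp add: add_divide_distrib)
      also have "(y - z)*x + (z - x)*y = z * (y - x)" by (simp add: algebra_simps)
      finally have zl: "z = l * x + (1 - l) * y" using ne0 by simp
      have run: "ok_run (\<lambda>c. l*0 + (1-l)*0) ts (map2 (\<lambda>a b. l*a+(1-l)*b) ds1 ds2)"
        using ok_run_convex[OF l d1(2) d2(2)] .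
      have len: "length ds1 = length ds2" using ok_run_len[OF d1(2)] ok_run_len[OF d2(2)] by simp
      have "sum_list (take i (map2 (\<lambda>a b. l*a+(1-l)*b) ds1 ds2)) = z"
        using sum_take_map2[OF len, of i l] d1(1) d2(1) zl by simp
      then show ?thesis using mem run by auto
    qed
  qed
  have un: "\<And>x y k. x\<in>?S \<Longrightarrow> of_int k < x \<Longrightarrow> x < of_int k + 1 \<Longrightarrow> of_int k < y \<Longrightarrow> y < of_int k + 1 \<Longrightarrow> y\<in>?S"
  proof -
    fix x y :: real and k :: int assume x: "x\<in>?S" and h: "of_int k < x" "x < of_int k + 1" "of_int k < y" "y < of_int k + 1"
    obtain ds where ds: "x = sum_list (take i ds)" "ok_run (\<lambda>_. 0) ts ds" using mem x by blast
    define f where "f = x - of_int k"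
    define f' where "f' = y - of_int k"
    have f: "0 < f" "f < 1" and f': "0 < f'" "f' < 1" using h unfolding f_def f'_def by auto
    let ?P = "phi f f'"
    have "ok_run (\<lambda>c. ?P 0 - ?P ((\<lambda>_. 0) c)) ts (mapd ?P 0 ds)"
      using ok_run_mapd[of ?P, OF phi_cmp[OF f f'] ds(2), of 0 "\<lambda>_. 0"] by simp
    then have run: "ok_run (\<lambda>_. 0) ts (mapd ?P 0 ds)" by simp
    have "sum_list (take i (mapd ?P 0 ds)) = ?P x - ?P 0" using sum_take_mapd[of i ?P 0 ds] ds(1) by simp
    also have "\<dots> = ?P (of_int k + f)" using phi_zero[OF f f'] unfolding f_def by simp
    also have "\<dots> = of_int k + f'" using phi_val[OF f f' f(1) f(2) refl] .
    also have "\<dots> = y" unfolding f'_def by simp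
    finally show "y \<in> ?S" using mem run by auto
  qed
  have I: "integral_set ?S" using integral_from_props[OF ne nn cv un] .
  moreover have "timestamp A ts i = ?S \<times> {act (ts ! (i - 1))}" unfolding timestamp_def ..
  ultimately show ?thesis by blast
qed


end
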